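(* Let $L=\langle S,A,\to\rangle$ be a labelled transition system. If Duplicator wins a configuration $\langle (s,t),\dagger,\dagger,*\rangle_S$ in the $\emptyset$-generic bisimulation game on $L$, she has an eager winning strategy from this configuration.
   Context: An LTS is $\langle S,A,\to\rangle$ with states $S$, actions $A$ containing the internal action $\tau$, and $\to\subseteq S\times A\times S$; write $s\xrightarrow{a}t$. $\emptyset$-generic bisimulation game: with formal tags $\frown,\smile$, Spoiler-owned configurations $\langle (s,t),c,m,r\rangle_S$ and Duplicator-owned $\langle (s,t),c,m,r\rangle_D$ with $(s,t)\in S\times S$, $c\in (A\times S)\cup\{\dagger\}$, $m\in (S\times\{\frown,\smile\})\cup\{\dagger\}$, $r\in\{*,\checkmark\}$. Spoiler from $\langle (s,t),c,m,r\rangle_S$ may: (S1) move to $\langle (s,t),c,m,*\rangle_D$ if $c\neq\dagger$; (S2a) for some $s\xrightarrow{a}s'$, move to $\langle (s,t),(a,s'),(t,\frown),*\rangle_D$ if $c=\dagger$; (S2b) for some $s\xrightarrow{a}s'$, move to $\langle (s,t),(a,s'),(t,\frown),\checkmark\rangle_D$ if $c\neq (a,s')$; (S3) for some $t\xrightarrow{a}t'$, move to $\langle (t,s),(a,t'),(s,\frown),\checkmark\rangle_D$. Duplicator from $\langle (u,v),(a,u'),(\bar v,f),r\rangle_D$ may: (D1) move to $\langle (u',\bar v),\dagger,\dagger,\checkmark\rangle_S$ if $a=\tau$; (D2) if $f=\frown$ and $\bar v\xrightarrow{a}v'$: (a) move to $\langle (u',v'),(a,u'),(v',\smile),*\rangle_S$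 or (b) move to $\langle (u',v'),\dagger,\dagger,\checkmark\rangle_S$; (D3) for some $\bar v\xrightarrow{\tau}v'$: (a) move to $\langle (u,v'),(a,u'),(v',f),*\rangle_S$, or (b) only if $f=\smile$, move to $\langle (u',v'),\dagger,\dagger,\checkmark\rangle_S$. Duplicator wins a finite play if Spoiler gets stuck, and an infinite play if it has infinitely many $\checkmark$ rewards; other plays are won by Spoiler. A strategy of Duplicator is winning from a configuration if all plays from it consistent with the strategy are won by her. A strategy of Duplicator is eager if it never uses move (D2)(a). *)

theory Defs
  imports Main "HOL-Library.Infinite_Set"
begin

text \<open>An LTS over states 's and actions 'a is given by a transition predicate
  step s a s' (meaning s --a--> s'), together with a distinguished internal action tau.\<close>

datatype player = Spoiler | Duplicator
datatype tag = Frown | Smile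
datatype reward = Star | Check

text \<open>Configurations. None encodes the dagger symbol.\<close>
datatype ('s, 'a) conf =
  Conf player "'s \<times> 's" "('a \<times> 's) option" "('s \<times> tag) option" reward

fun owner :: "('s, 'a) conf \<Rightarrow> player" where
  "owner (Conf p _ _ _ _) = p"

fun rew :: "('s, 'a) conf \<Rightarrow> reward" where
  "rew (Conf _ _ _ _ r) = r"

definition d2a_move :: "('s \<Rightarrow> 'a \<Rightarrow> 's \<Rightarrow> bool) \<Rightarrow> ('s, 'a) conf \<Rightarrow> ('s, 'a) conf \<Rightarrow> bool" where
  "d2a_move step c c' \<longleftrightarrow> (\<exists>u v a u' vb r v'.
      c = Conf Duplicator (u, v) (Some (a, u')) (Some (vb, Frown)) r \<and> step vb a v' \<and>
      c' = Conf Spoiler (u', v') (Some (a, u')) (Some (v', Smile)) Star)"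

inductive gmove :: "'a \<Rightarrow> ('s \<Rightarrow> 'a \<Rightarrow> 's \<Rightarrow> bool) \<Rightarrow> ('s, 'a) conf \<Rightarrow> ('s, 'a) conf \<Rightarrow> bool"
  for tau :: 'a and step :: "'s \<Rightarrow> 'a \<Rightarrow> 's \<Rightarrow> bool" where
  S1: "c \<noteq> None \<Longrightarrow> gmove tau step (Conf Spoiler p c m r) (Conf Duplicator p c m Star)"
| S2a: "step s a s' \<Longrightarrow>
     gmove tau step (Conf Spoiler (s, t) None m r)
       (Conf Duplicator (s, t) (Some (a, s')) (Some (t, Frown)) Star)"
| S2b: "step s a s' \<Longrightarrow> c \<noteq> Some (a, s') \<Longrightarrow>
     gmove tau step (Conf Spoiler (s, t) c m r)
       (Conf Duplicator (s, t) (Some (a, s')) (Some (t, Frown)) Check)"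
| S3: "step t a t' \<Longrightarrow>
     gmove tau step (Conf Spoiler (s, t) c m r)
       (Conf Duplicator (t, s) (Some (a, t')) (Some (s, Frown)) Check)"
| D1: "a = tau \<Longrightarrow>
     gmove tau step (Conf Duplicator (u, v) (Some (a, u')) (Some (vb, f)) r)
       (Conf Spoiler (u', vb) None None Check)"
| D2a: "f = Frown \<Longrightarrow> step vb a v' \<Longrightarrow>
     gmove tau step (Conf Duplicator (u, v) (Some (a, u')) (Some (vb, f)) r)
       (Conf Spoiler (u', v') (Some (a, u')) (Some (v', Smile)) Star)"
| D2b: "f = Frown \<Longrightarrow> step vb a v' \<Longrightarrow>
     gmove tau step (Conf Duplicator (u, v) (Some (a, u')) (Some (vb, f)) r)
       (Conf Spoiler (u', v') None None Check)"
| D3a: "step vb tau v' \<Longrightarrow>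
     gmove tau step (Conf Duplicator (u, v) (Some (a, u')) (Some (vb, f)) r)
       (Conf Spoiler (u, v') (Some (a, u')) (Some (v', f)) Star)"
| D3b: "f = Smile \<Longrightarrow> step vb tau v' \<Longrightarrow>
     gmove tau step (Conf Duplicator (u, v) (Some (a, u')) (Some (vb, f)) r)
       (Conf Spoiler (u', v') None None Check)"

text \<open>Duplicator strategies are history dependent: they map a nonempty finite play prefix
  (ending in a Duplicator configuration) to the next configuration.\<close>
type_synonym ('s, 'a) strategy = "('s, 'a) conf list \<Rightarrow> ('s, 'a) conf"

definition legal_strategy :: "'a \<Rightarrow> ('s \<Rightarrow> 'a \<Rightarrow> 's \<Rightarrow> bool) \<Rightarrow> ('s, 'a) strategy \<Rightarrow> bool" where
  "legal_strategy tau step \<sigma> \<longleftrightarrow> (\<forall>h. h \<noteq> [] \<and> owner (last h) = Duplicator \<and>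
       (\<exists>c'. gmove tau step (last h) c') \<longrightarrow> gmove tau step (last h) (\<sigma> h))"

definition fin_play :: "'a \<Rightarrow> ('s \<Rightarrow> 'a \<Rightarrow> 's \<Rightarrow> bool) \<Rightarrow> ('s, 'a) strategy \<Rightarrow> ('s, 'a) conf
    \<Rightarrow> ('s, 'a) conf list \<Rightarrow> bool" where
  "fin_play tau step \<sigma> c0 p \<longleftrightarrow> p \<noteq> [] \<and> hd p = c0 \<and>
     (\<forall>i. Suc i < length p \<longrightarrow> gmove tau step (p ! i) (p ! Suc i) \<and>
        (owner (p ! i) = Duplicator \<longrightarrow> p ! Suc i = \<sigma> (take (Suc i) p))) \<and>
     \<not> (\<exists>c'. gmove tau step (last p) c')"

definition inf_play :: "'a \<Rightarrow> ('s \<Rightarrow> 'a \<Rightarrow> 's \<Rightarrow> bool) \<Rightarrow> ('s, 'a) strategy \<Rightarrow> ('s, 'a) conf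
    \<Rightarrow> (nat \<Rightarrow> ('s, 'a) conf) \<Rightarrow> bool" where
  "inf_play tau step \<sigma> c0 \<rho> \<longleftrightarrow> \<rho> 0 = c0 \<and>
     (\<forall>i. gmove tau step (\<rho> i) (\<rho> (Suc i)) \<and>
        (owner (\<rho> i) = Duplicator \<longrightarrow> \<rho> (Suc i) = \<sigma> (map \<rho> [0..<Suc i])))"

text \<open>Duplicator wins a finite play iff Spoiler is stuck at its end, and an infinite play iff
  it has infinitely many Check rewards.\<close>
definition winning_strategy :: "'a \<Rightarrow> ('s \<Rightarrow> 'a \<Rightarrow> 's \<Rightarrow> bool) \<Rightarrow> ('s, 'a) strategy
    \<Rightarrow> ('s, 'a) conf \<Rightarrow> bool" where
  "winning_strategy tau step \<sigma> c0 \<longleftrightarrow> legal_strategy tau step \<sigma> \<and>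
     (\<forall>p. fin_play tau step \<sigma> c0 p \<longrightarrow> owner (last p) = Spoiler) \<and>
     (\<forall>\<rho>. inf_play tau step \<sigma> c0 \<rho> \<longrightarrow> (\<exists>\<^sub>\<infinity>i. rew (\<rho> i) = Check))"

definition dup_wins :: "'a \<Rightarrow> ('s \<Rightarrow> 'a \<Rightarrow> 's \<Rightarrow> bool) \<Rightarrow> ('s, 'a) conf \<Rightarrow> bool" where
  "dup_wins tau step c0 \<longleftrightarrow> (\<exists>\<sigma>. winning_strategy tau step \<sigma> c0)"

definition eager :: "('s \<Rightarrow> 'a \<Rightarrow> 's \<Rightarrow> bool) \<Rightarrow> ('s, 'a) strategy \<Rightarrow> bool" where
  "eager step \<sigma> \<longleftrightarrow> (\<forall>h. h \<noteq> [] \<longrightarrow> \<not> d2a_move step (last h) (\<sigma> h))"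

end

theory Submission imports Defs begin

fun pairof :: "('s,'a) conf \<Rightarrow> 's \<times> 's" where "pairof (Conf _ p _ _ _) = p"
fun chof :: "('s,'a) conf \<Rightarrow> ('a \<times> 's) option" where "chof (Conf _ _ ch _ _) = ch"
fun mof :: "('s,'a) conf \<Rightarrow> ('s \<times> tag) option" where "mof (Conf _ _ _ m _) = m"
fun setrew :: "reward \<Rightarrow> ('s,'a) conf \<Rightarrow> ('s,'a) conf" where
  "setrew r (Conf pl p ch m _) = Conf pl p ch m r"

definition EqR :: "('s,'a) conf \<Rightarrow> ('s,'a) conf \<Rightarrow> bool" where
  "EqR c' c \<longleftrightarrow> (\<exists>pl p ch m r r'. c' = Conf pl p ch m r' \<and> c = Conf pl p ch m r)"
definition XYR :: "('s,'a) conf \<Rightarrow> ('s,'a) conf \<Rightarrow> bool" where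
  "XYR c' c \<longleftrightarrow> (\<exists>x y a. c' = Conf Spoiler (x,y) None None Check \<and>
     c = Conf Spoiler (x,y) (Some (a,x)) (Some (y,Smile)) Star)"
definition FSR :: "('s \<Rightarrow> 'a \<Rightarrow> 's \<Rightarrow> bool) \<Rightarrow> ('s,'a) conf \<Rightarrow> ('s,'a) conf \<Rightarrow> bool" where
  "FSR step c' c \<longleftrightarrow> (\<exists>pl u v a r r'. step u a u \<and> c' = Conf pl (u,v) (Some (a,u)) (Some (v,Frown)) r' \<and>
     c = Conf pl (u,v) (Some (a,u)) (Some (v,Smile)) r)"
definition SYR :: "('s \<Rightarrow> 'a \<Rightarrow> 's \<Rightarrow> bool) \<Rightarrow> ('s,'a) conf \<Rightarrow> ('s,'a) conf \<Rightarrow> bool" where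
  "SYR step c' c \<longleftrightarrow> (\<exists>u v a r'. step u a u \<and> c' = Conf Spoiler (u,v) (Some (a,u)) (Some (v,Frown)) r' \<and>
     c = Conf Spoiler (u,v) None None Check)"
definition RR :: "('s \<Rightarrow> 'a \<Rightarrow> 's \<Rightarrow> bool) \<Rightarrow> ('s,'a) conf \<Rightarrow> ('s,'a) conf \<Rightarrow> bool" where
  "RR step c' c \<longleftrightarrow> EqR c' c \<or> XYR c' c \<or> FSR step c' c \<or> SYR step c' c"

definition str :: "('s,'a) conf \<Rightarrow> ('s,'a) conf \<Rightarrow> ('s,'a) conf \<Rightarrow> ('s,'a) conf" where
  "str c' c n' = (if (\<exists>v. mof c = Some (v,Smile) \<and> mof c' \<noteq> mof c \<and> owner n' = Duplicator \<and>
       pairof n' = pairof c \<and> chof n' = chof c \<and> mof n' = Some (v,Frown))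
     then Conf Duplicator (pairof c) (chof c) (mof c) Star
     else if chof c' = None \<and> chof c \<noteq> None then setrew Check n' else n')"

definition dtr :: "'a \<Rightarrow> ('s \<Rightarrow> 'a \<Rightarrow> 's \<Rightarrow> bool) \<Rightarrow> ('s,'a) conf \<Rightarrow> ('s,'a) conf \<Rightarrow> ('s,'a) conf \<Rightarrow> ('s,'a) conf" where
  "dtr tau step c' c d = (if d2a_move step c d then Conf Spoiler (pairof d) None None Check
     else if mof c' \<noteq> mof c then
       (if chof d = None \<and> (\<exists>u. chof c = Some (tau,u)) \<and> pairof d = pairof c then d
        else Conf Spoiler (pairof d) (chof c) (Some (snd (pairof d), Frown)) Star)
     else d)"

lemma RR_owner: "RR step c' c \<Longrightarrow> owner c' = owner c"
  unfolding RR_def EqR_def XYR_def FSR_def SYR_def by auto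

lemma FS_SY: "\<not> (FSR step c' c \<and> SYR step c' c)"
  unfolding FSR_def SYR_def by auto

inductive_cases spoE: "gmove tau step (Conf Spoiler p c m r) n'"
inductive_cases dupE: "gmove tau step (Conf Duplicator p c m r) n'"

definition SPOK :: "'a \<Rightarrow> ('s \<Rightarrow> 'a \<Rightarrow> 's \<Rightarrow> bool) \<Rightarrow> ('s,'a) conf \<Rightarrow> ('s,'a) conf \<Rightarrow> ('s,'a) conf \<Rightarrow> bool" where
  "SPOK tau step c' c n' \<longleftrightarrow> gmove tau step c (str c' c n') \<and> RR step n' (str c' c n') \<and>
    (rew (str c' c n') = Check \<longrightarrow> rew n' = Check \<or> rew c' = Check) \<and>
    (FSR step n' (str c' c n') \<longrightarrow> FSR step c' c \<or> rew c' = Check)"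

lemma SP_XY:
  "gmove tau step (Conf Spoiler (x,y) None None Check) n' \<Longrightarrow>
   SPOK tau step (Conf Spoiler (x,y) None None Check) (Conf Spoiler (x,y) (Some (a,x)) (Some (y,Smile)) Star) n'"
  unfolding SPOK_def
  apply (erule spoE)
  subgoal by simp
  subgoal by (auto simp: str_def RR_def EqR_def FSR_def intro: gmove.intros)
  subgoal by (auto simp: str_def RR_def EqR_def FSR_def intro: gmove.intros)
  subgoal for t b t' s
    apply (cases "s = t")
    subgoal by (auto simp: str_def RR_def EqR_def FSR_def intro: gmove.intros)
    subgoal by (auto simp: str_def RR_def EqR_def FSR_def intro: gmove.intros)
    done
  done
lemma SP_FS:
  "step u a u \<Longrightarrow> gmove tau step (Conf Spoiler (u,v) (Some (a,u)) (Some (v,Frown)) r') n' \<Longrightarrow>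
   SPOK tau step (Conf Spoiler (u,v) (Some (a,u)) (Some (v,Frown)) r') (Conf Spoiler (u,v) (Some (a,u)) (Some (v,Smile)) r) n'"
  unfolding SPOK_def
  apply (erule spoE)
  subgoal by (auto simp: str_def RR_def EqR_def FSR_def intro: gmove.intros)
  subgoal by simp
  subgoal by (auto simp: str_def RR_def EqR_def FSR_def intro: gmove.intros)
  subgoal for t b t' s
    apply (cases "s = t")
    subgoal by (auto simp: str_def RR_def EqR_def FSR_def intro: gmove.intros)
    subgoal by (auto simp: str_def RR_def EqR_def FSR_def intro: gmove.intros)
    done
  done

lemma SP_SY:
  "step u a u \<Longrightarrow> gmove tau step (Conf Spoiler (u,v) (Some (a,u)) (Some (v,Frown)) r') n' \<Longrightarrow>
   SPOK tau step (Conf Spoiler (u,v) (Some (a,u)) (Some (v,Frown)) r') (Conf Spoiler (u,v) None None Check) n'"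
  unfolding SPOK_def
  apply (erule spoE)
  subgoal by (auto simp: str_def RR_def EqR_def FSR_def intro: gmove.intros)
  subgoal by simp
  subgoal by (auto simp: str_def RR_def EqR_def FSR_def intro: gmove.intros)
  subgoal for t b t' s
    apply (cases "s = t")
    subgoal by (auto simp: str_def RR_def EqR_def FSR_def intro: gmove.intros)
    subgoal by (auto simp: str_def RR_def EqR_def FSR_def intro: gmove.intros)
    done
  done

lemma SP_Eq:
  "gmove tau step (Conf Spoiler p ch m r') n' \<Longrightarrow>
   SPOK tau step (Conf Spoiler p ch m r') (Conf Spoiler p ch m r) n'"
  unfolding SPOK_def
  apply (erule spoE)
  subgoal by (auto simp: str_def RR_def EqR_def FSR_def intro: gmove.intros)
  subgoal by (auto simp: str_def RR_def EqR_def FSR_def intro: gmove.intros)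
  subgoal by (auto simp: str_def RR_def EqR_def FSR_def intro: gmove.intros)
  subgoal by (auto simp: str_def RR_def EqR_def FSR_def intro: gmove.intros)
  done
definition DUPOK :: "'a \<Rightarrow> ('s \<Rightarrow> 'a \<Rightarrow> 's \<Rightarrow> bool) \<Rightarrow> ('s,'a) conf \<Rightarrow> ('s,'a) conf \<Rightarrow> ('s,'a) conf \<Rightarrow> bool" where
  "DUPOK tau step c' c d \<longleftrightarrow> gmove tau step c' (dtr tau step c' c d) \<and> \<not> d2a_move step c' (dtr tau step c' c d) \<and>
    RR step (dtr tau step c' c d) d \<and>
    (rew d = Check \<longrightarrow> rew (dtr tau step c' c d) = Check \<or> rew c' = Check \<or>
        (FSR step c' c \<and> SYR step (dtr tau step c' c d) d)) \<and>
    (FSR step (dtr tau step c' c d) d \<longrightarrow> FSR step c' c \<or> rew c' = Check)"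

lemma DP_Eq:
  "gmove tau step (Conf Duplicator p ch m r) d \<Longrightarrow>
   DUPOK tau step (Conf Duplicator p ch m r') (Conf Duplicator p ch m r) d"
  unfolding DUPOK_def
  apply (erule dupE)
  subgoal by (auto simp: dtr_def d2a_move_def RR_def EqR_def FSR_def XYR_def intro: gmove.intros)
  subgoal by (auto simp: dtr_def d2a_move_def RR_def EqR_def FSR_def XYR_def intro: gmove.intros)
  subgoal by (auto simp: dtr_def d2a_move_def RR_def EqR_def FSR_def XYR_def intro: gmove.intros)
  subgoal by (auto simp: dtr_def d2a_move_def RR_def EqR_def FSR_def XYR_def intro: gmove.intros)
  subgoal by (auto simp: dtr_def d2a_move_def RR_def EqR_def FSR_def XYR_def intro: gmove.intros)
  done

lemma DP_FS:
  "step u a u \<Longrightarrow> gmove tau step (Conf Duplicator (u,v) (Some (a,u)) (Some (v,Smile)) r) d \<Longrightarrow>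
   DUPOK tau step (Conf Duplicator (u,v) (Some (a,u)) (Some (v,Frown)) r') (Conf Duplicator (u,v) (Some (a,u)) (Some (v,Smile)) r) d"
  unfolding DUPOK_def
  apply (erule dupE)
  subgoal by (auto simp: dtr_def d2a_move_def RR_def EqR_def FSR_def XYR_def intro: gmove.intros)
  subgoal by simp
  subgoal by simp
  subgoal by (auto simp: dtr_def d2a_move_def RR_def EqR_def FSR_def XYR_def SYR_def intro: gmove.intros)
  subgoal for vb v' 
    apply (cases "a = tau \<and> v' = v")
    subgoal by (auto simp: dtr_def d2a_move_def RR_def EqR_def FSR_def XYR_def SYR_def intro: gmove.intros)
    subgoal by (auto simp: dtr_def d2a_move_def RR_def EqR_def FSR_def XYR_def SYR_def intro: gmove.intros)
    done
  done
lemma L_spo: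
  assumes "RR step c' c" "owner c' = Spoiler" "gmove tau step c' n'"
  shows "SPOK tau step c' c n'"
  using assms(1) unfolding RR_def
proof (elim disjE)
  assume "EqR c' c"
  then obtain pl p ch m r r' where e: "c' = Conf pl p ch m r'" "c = Conf pl p ch m r" unfolding EqR_def by blast
  then show ?thesis using assms(2,3) SP_Eq by (cases pl; cases p) auto
next
  assume "XYR c' c"
  then obtain x y a where "c' = Conf Spoiler (x,y) None None Check"
     "c = Conf Spoiler (x,y) (Some (a,x)) (Some (y,Smile)) Star" unfolding XYR_def by blast
  then show ?thesis using assms(3) SP_XY by simp
next
  assume "FSR step c' c"
  then obtain pl u v a r r' where e: "step u a u" "c' = Conf pl (u,v) (Some (a,u)) (Some (v,Frown)) r'"
     "c = Conf pl (u,v) (Some (a,u)) (Some (v,Smile)) r" unfolding FSR_def by blast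
  then show ?thesis using assms(2,3) SP_FS by (cases pl) auto
next
  assume "SYR step c' c"
  then obtain u v a r' where "step u a u" "c' = Conf Spoiler (u,v) (Some (a,u)) (Some (v,Frown)) r'"
     "c = Conf Spoiler (u,v) None None Check" unfolding SYR_def by blast
  then show ?thesis using assms(3) SP_SY by simp
qed

lemma L_dup:
  assumes "RR step c' c" "owner c = Duplicator" "gmove tau step c d"
  shows "DUPOK tau step c' c d"
  using assms(1) unfolding RR_def
proof (elim disjE)
  assume "EqR c' c"
  then obtain pl p ch m r r' where e: "c' = Conf pl p ch m r'" "c = Conf pl p ch m r" unfolding EqR_def by blast
  then show ?thesis using assms(2,3) DP_Eq by (cases pl; cases p) auto
next
  assume "XYR c' c"
  then show ?thesis using assms(2) unfolding XYR_def by force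
next
  assume "FSR step c' c"
  then obtain pl u v a r r' where e: "step u a u" "c' = Conf pl (u,v) (Some (a,u)) (Some (v,Frown)) r'"
     "c = Conf pl (u,v) (Some (a,u)) (Some (v,Smile)) r" unfolding FSR_def by blast
  then show ?thesis using assms(2,3) DP_FS by (cases pl) auto
next
  assume "SYR step c' c"
  then show ?thesis using assms(2) unfolding SYR_def by force
qed

definition nx :: "('s,'a) strategy \<Rightarrow> ('s,'a) conf list \<Rightarrow> ('s,'a) conf \<Rightarrow> ('s,'a) conf \<Rightarrow> ('s,'a) conf" where
  "nx \<sigma> hs c' n' = (if owner c' = Duplicator then \<sigma> hs else str c' (last hs) n')"

primrec HH :: "('s,'a) strategy \<Rightarrow> (nat \<Rightarrow> ('s,'a) conf) \<Rightarrow> nat \<Rightarrow> ('s,'a) conf list" where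
  "HH \<sigma> f 0 = [f 0]"
| "HH \<sigma> f (Suc i) = HH \<sigma> f i @ [nx \<sigma> (HH \<sigma> f i) (f i) (f (Suc i))]"

fun simr :: "('s,'a) strategy \<Rightarrow> ('s,'a) conf list \<Rightarrow> ('s,'a) conf \<Rightarrow> ('s,'a) conf list \<Rightarrow> ('s,'a) conf list" where
  "simr \<sigma> hs c' [] = hs"
| "simr \<sigma> hs c' (n' # ns) = simr \<sigma> (hs @ [nx \<sigma> hs c' n']) n' ns"

definition sim :: "('s,'a) strategy \<Rightarrow> ('s,'a) conf list \<Rightarrow> ('s,'a) conf list" where
  "sim \<sigma> h = simr \<sigma> [hd h] (hd h) (tl h)"

definition dflt :: "'a \<Rightarrow> ('s \<Rightarrow> 'a \<Rightarrow> 's \<Rightarrow> bool) \<Rightarrow> ('s,'a) conf list \<Rightarrow> ('s,'a) conf" where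
  "dflt tau step h = (if \<exists>e. gmove tau step (last h) e \<and> \<not> d2a_move step (last h) e
     then SOME e. gmove tau step (last h) e \<and> \<not> d2a_move step (last h) e else last h)"

definition sig' :: "'a \<Rightarrow> ('s \<Rightarrow> 'a \<Rightarrow> 's \<Rightarrow> bool) \<Rightarrow> ('s,'a) strategy \<Rightarrow> ('s,'a) strategy" where
  "sig' tau step \<sigma> h = (let d' = dtr tau step (last h) (last (sim \<sigma> h)) (\<sigma> (sim \<sigma> h)) in
     if gmove tau step (last h) d' \<and> \<not> d2a_move step (last h) d' then d' else dflt tau step h)"

definition gg :: "('s,'a) strategy \<Rightarrow> (nat \<Rightarrow> ('s,'a) conf) \<Rightarrow> nat \<Rightarrow> ('s,'a) conf" where
  "gg \<sigma> f j = last (HH \<sigma> f j)"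

lemma simr_snoc: "simr \<sigma> hs c' (ns @ [n']) = simr \<sigma> hs c' ns @ [nx \<sigma> (simr \<sigma> hs c' ns) (last (c' # ns)) n']"
  by (induction ns arbitrary: hs c') auto

lemma simr_HH: "simr \<sigma> [f 0] (f 0) (map f [Suc 0..<Suc i]) = HH \<sigma> f i"
proof (induction i)
  case 0
  then show ?case by simp
next
  case (Suc i)
  have l: "last (f 0 # map f [Suc 0..<Suc i]) = f i" by (induction i) auto
  have m: "map f [Suc 0..<Suc (Suc i)] = map f [Suc 0..<Suc i] @ [f (Suc i)]" by simp
  have "simr \<sigma> [f 0] (f 0) (map f [Suc 0..<Suc (Suc i)]) =
     simr \<sigma> [f 0] (f 0) (map f [Suc 0..<Suc i]) @ [nx \<sigma> (simr \<sigma> [f 0] (f 0) (map f [Suc 0..<Suc i])) (last (f 0 # map f [Suc 0..<Suc i])) (f (Suc i))]"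
    unfolding m by (rule simr_snoc)
  also have "\<dots> = HH \<sigma> f (Suc i)" unfolding l Suc.IH by simp
  finally show ?case .
qed

lemma sim_map: "sim \<sigma> (map f [0..<Suc i]) = HH \<sigma> f i"
proof -
  have e: "map f [0..<Suc i] = f 0 # map f [Suc 0..<Suc i]" by (subst upt_conv_Cons) auto
  show ?thesis unfolding sim_def e list.sel by (rule simr_HH)
qed

lemma HH_map: "HH \<sigma> f i = map (gg \<sigma> f) [0..<Suc i]"
proof (induction i)
  case 0
  then show ?case by (simp add: gg_def)
next
  case (Suc i)
  have "HH \<sigma> f (Suc i) = HH \<sigma> f i @ [gg \<sigma> f (Suc i)]" by (simp add: gg_def)
  then show ?case using Suc.IH by simp
qed

lemma gg0: "gg \<sigma> f 0 = f 0" by (simp add: gg_def)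

lemma ggSuc: "gg \<sigma> f (Suc i) = nx \<sigma> (HH \<sigma> f i) (f i) (f (Suc i))" by (simp add: gg_def)

lemma last_HH: "last (HH \<sigma> f i) = gg \<sigma> f i" by (simp add: gg_def)
lemma dflt_ok:
  assumes "\<exists>e. gmove tau step (last h) e"
  shows "gmove tau step (last h) (dflt tau step h) \<and> \<not> d2a_move step (last h) (dflt tau step h)"
proof -
  obtain e where e: "gmove tau step (last h) e" using assms by blast
  have ex: "\<exists>e. gmove tau step (last h) e \<and> \<not> d2a_move step (last h) e"
  proof (cases "d2a_move step (last h) e")
    case True
    then obtain u v a u' vb r v' where
      "last h = Conf Duplicator (u, v) (Some (a, u')) (Some (vb, Frown)) r" "step vb a v'"
      unfolding d2a_move_def by blast
    then have "gmove tau step (last h) (Conf Spoiler (u', v') None None Check)"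
      using gmove.D2b[of Frown step vb a v' tau u v u' r] by simp
    moreover have "\<not> d2a_move step (last h) (Conf Spoiler (u', v') None None Check)"
      by (simp add: d2a_move_def)
    ultimately show ?thesis by blast
  next
    case False
    then show ?thesis using e by blast
  qed
  show ?thesis unfolding dflt_def using someI_ex[OF ex] ex by simp
qed

lemma no_d2a_self: "\<not> d2a_move step c c"
  unfolding d2a_move_def by (cases c) simp

lemma dflt_eager: "\<not> d2a_move step (last h) (dflt tau step h)"
proof (cases "\<exists>e. gmove tau step (last h) e")
  case True
  show ?thesis using dflt_ok[OF True] by (rule conjunct2)
next
  case False
  then have "\<not> (\<exists>e. gmove tau step (last h) e \<and> \<not> d2a_move step (last h) e)" by blast
  then have "dflt tau step h = last h" unfolding dflt_def by (rule if_not_P)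
  then show ?thesis using no_d2a_self[of step "last h"] by simp
qed
lemma sig'_cases:
  "(gmove tau step (last h) (sig' tau step \<sigma> h) \<and> \<not> d2a_move step (last h) (sig' tau step \<sigma> h))
   \<or> sig' tau step \<sigma> h = dflt tau step h"
proof -
  obtain d' where d: "d' = dtr tau step (last h) (last (sim \<sigma> h)) (\<sigma> (sim \<sigma> h))" by blast
  have e: "sig' tau step \<sigma> h = (if gmove tau step (last h) d' \<and> \<not> d2a_move step (last h) d' then d' else dflt tau step h)"
    unfolding sig'_def Let_def d by (rule refl)
  show ?thesis
  proof (cases "gmove tau step (last h) d' \<and> \<not> d2a_move step (last h) d'")
    case True
    then show ?thesis unfolding e by (simp only: if_True simp_thms)
  next
    case False
    then show ?thesis unfolding e by (simp only: if_False simp_thms)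
  qed
qed

lemma sig'_legal: "legal_strategy tau step (sig' tau step \<sigma>)"
  unfolding legal_strategy_def
proof (intro allI impI)
  fix h assume a: "h \<noteq> [] \<and> owner (last h) = Duplicator \<and> (\<exists>c'. gmove tau step (last h) c')"
  show "gmove tau step (last h) (sig' tau step \<sigma> h)"
  proof -
    have g: "gmove tau step (last h) (dflt tau step h)" using dflt_ok[of tau step h] a by blast
    from sig'_cases[of tau step h \<sigma>] show ?thesis
    proof
      assume "sig' tau step \<sigma> h = dflt tau step h" then show ?thesis using g by simp
    qed blast
  qed
qed

lemma sig'_eager: "eager step (sig' tau step \<sigma>)"
  unfolding eager_def
proof (intro allI impI)
  fix h
  show "\<not> d2a_move step (last h) (sig' tau step \<sigma> h)"
    using sig'_cases[of tau step h \<sigma>]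
  proof
    assume "sig' tau step \<sigma> h = dflt tau step h" then show ?thesis using dflt_eager[of step h tau] by simp
  qed blast
qed
lemma infm_transfer:
  fixes P Q A B :: "nat \<Rightarrow> bool"
  assumes R1: "\<And>j. Q (Suc j) \<Longrightarrow> P (Suc j) \<or> P j \<or> (A j \<and> B (Suc j))"
  and R2: "\<And>j. A (Suc j) \<Longrightarrow> A j \<or> P j"
  and R3: "\<And>j. \<not> (A j \<and> B j)"
  and inf: "\<exists>\<^sub>\<infinity> i. Q i"
  shows "\<exists>\<^sub>\<infinity> i. P i"
proof -
  have down: "A (m + d) \<Longrightarrow> (\<forall>k. m \<le> k \<and> k < m + d \<longrightarrow> \<not> P k) \<Longrightarrow> A m" for m d
  proof (induction d)
    case 0 then show ?case by simp
  next
    case (Suc d)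
    have "A (m+d) \<or> P (m+d)" using R2[of "m+d"] Suc.prems(1) by simp
    then have "A (m+d)" using Suc.prems(2) by auto
    then show ?case using Suc.IH Suc.prems(2) by auto
  qed
  show ?thesis unfolding INFM_nat
  proof
    fix N
    obtain i1 where i1: "i1 > Suc N" "Q i1" using inf unfolding INFM_nat by blast
    obtain i2 where i2: "i2 > i1" "Q i2" using inf unfolding INFM_nat by blast
    obtain j1 where j1: "i1 = Suc j1" using i1 by (cases i1) auto
    obtain j2 where j2: "i2 = Suc j2" using i2 by (cases i2) auto
    show "\<exists>n>N. P n"
    proof (rule ccontr)
      assume no: "\<not> (\<exists>n>N. P n)"
      have a1: "A j1 \<and> B i1" using R1[of j1] i1 j1 no by auto
      have "A j2" using R1[of j2] i2 j2 no i1 j1 by auto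
      moreover have "j2 = i1 + (j2 - i1)" using i2 j2 by simp
      ultimately have "A (i1 + (j2 - i1))" by simp
      moreover have "\<forall>k. i1 \<le> k \<and> k < i1 + (j2 - i1) \<longrightarrow> \<not> P k" using no i1 by auto
      ultimately have "A i1" using down by blast
      then show False using a1 R3 by blast
    qed
  qed
qed

lemma take_nth_map: "k \<le> length p \<Longrightarrow> take k p = map ((!) p) [0..<k]"
  by (rule nth_equalityI) auto

lemma stuck_contra:
  assumes W: "winning_strategy tau step \<sigma> c0" and g0: "g 0 = c0"
  and ch: "\<forall>j<i. gmove tau step (g j) (g (Suc j)) \<and> (owner (g j) = Duplicator \<longrightarrow> g (Suc j) = \<sigma> (map g [0..<Suc j]))"
  and own: "owner (g i) = Duplicator"
  shows "\<exists>d. gmove tau step (g i) d"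
proof (rule ccontr)
  assume nm: "\<not> (\<exists>d. gmove tau step (g i) d)"
  define p where "p = map g [0..<Suc i]"
  have len: "length p = Suc i" unfolding p_def by simp
  have nth: "k < Suc i \<Longrightarrow> p ! k = g k" for k unfolding p_def by (simp del: upt_Suc)
  have lst: "last p = g i" unfolding p_def by simp
  have hd: "hd p = g 0" unfolding p_def by (simp del: upt_Suc add: upt_conv_Cons)
  have tk: "k < i \<Longrightarrow> take (Suc k) p = map g [0..<Suc k]" for k
    unfolding p_def by (simp add: take_map)
  have "fin_play tau step \<sigma> c0 p"
    unfolding fin_play_def
  proof (intro conjI allI impI)
    show "p \<noteq> []" using len by auto
    show "hd p = c0" using hd g0 by simp
    show "\<not> (\<exists>c'. gmove tau step (last p) c')" using nm lst by simp
  next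
    fix k assume k: "Suc k < length p"
    then have ki: "k < i" using len by simp
    show "gmove tau step (p ! k) (p ! Suc k)" using ch ki nth[of k] nth[of "Suc k"] by simp
  next
    fix k assume k: "Suc k < length p" and o: "owner (p ! k) = Duplicator"
    then have ki: "k < i" using len by simp
    show "p ! Suc k = \<sigma> (take (Suc k) p)" using ch ki nth[of k] nth[of "Suc k"] o tk[OF ki] by simp
  qed
  then have "owner (last p) = Spoiler" using W unfolding winning_strategy_def by blast
  then show False using own lst by simp
qed

lemma sig'_eval:
  "gmove tau step (last h) (dtr tau step (last h) (last (sim \<sigma> h)) (\<sigma> (sim \<sigma> h))) \<Longrightarrow>
   \<not> d2a_move step (last h) (dtr tau step (last h) (last (sim \<sigma> h)) (\<sigma> (sim \<sigma> h))) \<Longrightarrow>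
   sig' tau step \<sigma> h = dtr tau step (last h) (last (sim \<sigma> h)) (\<sigma> (sim \<sigma> h))"
  unfolding sig'_def Let_def by (rule if_P) blast
definition RW :: "('s \<Rightarrow> 'a \<Rightarrow> 's \<Rightarrow> bool) \<Rightarrow> (nat \<Rightarrow> ('s,'a) conf) \<Rightarrow> (nat \<Rightarrow> ('s,'a) conf) \<Rightarrow> nat \<Rightarrow> bool" where
  "RW step f g j \<longleftrightarrow> (rew (g (Suc j)) = Check \<longrightarrow> rew (f (Suc j)) = Check \<or> rew (f j) = Check \<or>
       (FSR step (f j) (g j) \<and> SYR step (f (Suc j)) (g (Suc j)))) \<and>
     (FSR step (f (Suc j)) (g (Suc j)) \<longrightarrow> FSR step (f j) (g j) \<or> rew (f j) = Check)"

lemma sim_inv: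
  assumes W: "winning_strategy tau step \<sigma> c0" and f0: "f 0 = c0"
  and st: "\<forall>i<n. gmove tau step (f i) (f (Suc i)) \<and>
      (owner (f i) = Duplicator \<longrightarrow> f (Suc i) = sig' tau step \<sigma> (map f [0..<Suc i]))"
  shows "i \<le> n \<Longrightarrow> RR step (f i) (gg \<sigma> f i) \<and>
    (\<forall>j<i. gmove tau step (gg \<sigma> f j) (gg \<sigma> f (Suc j)) \<and>
      (owner (gg \<sigma> f j) = Duplicator \<longrightarrow> gg \<sigma> f (Suc j) = \<sigma> (map (gg \<sigma> f) [0..<Suc j])) \<and>
      RW step f (gg \<sigma> f) j)"
proof (induction i)
  case 0
  have "EqR (f 0) (f 0)" by (cases "f 0") (auto simp: EqR_def)
  then show ?case by (simp add: gg0 RR_def)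
next
  case (Suc i)
  let ?g = "gg \<sigma> f"
  have iln: "i < n" using Suc.prems by simp
  have IH: "RR step (f i) (?g i)"
    "\<forall>j<i. gmove tau step (?g j) (?g (Suc j)) \<and>
      (owner (?g j) = Duplicator \<longrightarrow> ?g (Suc j) = \<sigma> (map ?g [0..<Suc j])) \<and> RW step f ?g j"
    using Suc.IH iln by auto
  have stp: "gmove tau step (f i) (f (Suc i))"
    and cons: "owner (f i) = Duplicator \<Longrightarrow> f (Suc i) = sig' tau step \<sigma> (map f [0..<Suc i])"
    using st iln by auto
  have new: "gmove tau step (?g i) (?g (Suc i)) \<and>
      (owner (?g i) = Duplicator \<longrightarrow> ?g (Suc i) = \<sigma> (map ?g [0..<Suc i])) \<and>
      RW step f ?g i \<and> RR step (f (Suc i)) (?g (Suc i))"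
  proof (cases "owner (f i)")
    case Spoiler
    have og: "owner (?g i) = Spoiler" using RR_owner[OF IH(1)] Spoiler by simp
    have gs: "?g (Suc i) = str (f i) (?g i) (f (Suc i))"
      using Spoiler by (simp add: ggSuc nx_def last_HH)
    have "SPOK tau step (f i) (?g i) (f (Suc i))" using L_spo[OF IH(1) Spoiler stp] .
    then show ?thesis using og gs unfolding SPOK_def RW_def by auto
  next
    case Duplicator
    have og: "owner (?g i) = Duplicator" using RR_owner[OF IH(1)] Duplicator by simp
    have ch: "\<forall>j<i. gmove tau step (?g j) (?g (Suc j)) \<and>
      (owner (?g j) = Duplicator \<longrightarrow> ?g (Suc j) = \<sigma> (map ?g [0..<Suc j]))" using IH(2) by blast
    have "\<exists>d. gmove tau step (?g i) d"
      using stuck_contra[OF W _ ch og] f0 by (simp add: gg0)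
    moreover have "legal_strategy tau step \<sigma>" using W unfolding winning_strategy_def by blast
    ultimately have gm: "gmove tau step (?g i) (\<sigma> (HH \<sigma> f i))"
    proof -
      assume ex: "\<exists>d. gmove tau step (?g i) d" and L: "legal_strategy tau step \<sigma>"
      have ne: "HH \<sigma> f i \<noteq> []" by (cases i) simp_all
      have "HH \<sigma> f i \<noteq> [] \<and> owner (last (HH \<sigma> f i)) = Duplicator \<and> (\<exists>c'. gmove tau step (last (HH \<sigma> f i)) c')"
        using ex og ne by (simp add: last_HH)
      then have "gmove tau step (last (HH \<sigma> f i)) (\<sigma> (HH \<sigma> f i))" using L unfolding legal_strategy_def by blast
      then show ?thesis by (simp add: last_HH)
    qed
    have gs: "?g (Suc i) = \<sigma> (HH \<sigma> f i)" using Duplicator by (simp add: ggSuc nx_def)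
    have hm: "HH \<sigma> f i = map ?g [0..<Suc i]" by (rule HH_map)
    define D where "D = dtr tau step (f i) (?g i) (\<sigma> (HH \<sigma> f i))"
    have DP: "DUPOK tau step (f i) (?g i) (\<sigma> (HH \<sigma> f i))" using L_dup[OF IH(1) og gm] .
    have lm: "last (map f [0..<Suc i]) = f i" by simp
    have sm: "sim \<sigma> (map f [0..<Suc i]) = HH \<sigma> f i" by (rule sim_map)
    have "sig' tau step \<sigma> (map f [0..<Suc i]) = D"
      unfolding D_def using sig'_eval[of tau step "map f [0..<Suc i]" \<sigma>] DP
      unfolding lm sm last_HH DUPOK_def by blast
    then have fs: "f (Suc i) = D" using cons Duplicator by simp
    show ?thesis using DP gm gs hm og unfolding DUPOK_def RW_def fs D_def by simp
  qed
  have "\<forall>j<Suc i. gmove tau step (?g j) (?g (Suc j)) \<and>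
      (owner (?g j) = Duplicator \<longrightarrow> ?g (Suc j) = \<sigma> (map ?g [0..<Suc j])) \<and> RW step f ?g j"
    using IH(2) new less_Suc_eq by auto
  then show ?case using new by blast
qed
lemma main_win:
  assumes W: "winning_strategy tau step \<sigma> c0"
  shows "winning_strategy tau step (sig' tau step \<sigma>) c0"
  unfolding winning_strategy_def
proof (intro conjI allI impI)
  show "legal_strategy tau step (sig' tau step \<sigma>)" by (rule sig'_legal)
next
  fix p assume fp: "fin_play tau step (sig' tau step \<sigma>) c0 p"
  define f where "f = (\<lambda>i. p ! i)"
  define n where "n = length p - 1"
  have pne: "p \<noteq> []" using fp unfolding fin_play_def by blast
  have lenp: "length p = Suc n" using pne unfolding n_def by (cases p) auto
  have f0: "f 0 = c0" using fp pne unfolding fin_play_def f_def by (simp add: hd_conv_nth)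
  have st: "\<forall>i<n. gmove tau step (f i) (f (Suc i)) \<and>
      (owner (f i) = Duplicator \<longrightarrow> f (Suc i) = sig' tau step \<sigma> (map f [0..<Suc i]))"
  proof (intro allI impI)
    fix i assume i: "i < n"
    have si: "Suc i < length p" using i lenp by simp
    have tk: "take (Suc i) p = map f [0..<Suc i]" unfolding f_def using si by (simp add: take_nth_map)
    show "gmove tau step (f i) (f (Suc i)) \<and>
      (owner (f i) = Duplicator \<longrightarrow> f (Suc i) = sig' tau step \<sigma> (map f [0..<Suc i]))"
    proof -
      have A: "gmove tau step (p ! i) (p ! Suc i) \<and> (owner (p ! i) = Duplicator \<longrightarrow> p ! Suc i = sig' tau step \<sigma> (take (Suc i) p))"
        using fp si unfolding fin_play_def by blast
      show ?thesis using A tk unfolding f_def by simp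
    qed
  qed
  have inv: "RR step (f n) (gg \<sigma> f n) \<and>
    (\<forall>j<n. gmove tau step (gg \<sigma> f j) (gg \<sigma> f (Suc j)) \<and>
      (owner (gg \<sigma> f j) = Duplicator \<longrightarrow> gg \<sigma> f (Suc j) = \<sigma> (map (gg \<sigma> f) [0..<Suc j])) \<and>
      RW step f (gg \<sigma> f) j)"
    using sim_inv[OF W f0 st, of n] by simp
  have lp: "last p = f n" unfolding f_def n_def using pne by (simp add: last_conv_nth)
  show "owner (last p) = Spoiler"
  proof (rule ccontr)
    assume "owner (last p) \<noteq> Spoiler"
    then have od: "owner (f n) = Duplicator" using lp by (cases "owner (last p)") auto
    have og: "owner (gg \<sigma> f n) = Duplicator" using RR_owner[of step "f n" "gg \<sigma> f n"] inv od by simp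
    have ch: "\<forall>j<n. gmove tau step (gg \<sigma> f j) (gg \<sigma> f (Suc j)) \<and>
      (owner (gg \<sigma> f j) = Duplicator \<longrightarrow> gg \<sigma> f (Suc j) = \<sigma> (map (gg \<sigma> f) [0..<Suc j]))"
      using inv by blast
    have g0: "gg \<sigma> f 0 = c0" using f0 by (simp add: gg0)
    obtain d where d: "gmove tau step (gg \<sigma> f n) d"
      using stuck_contra[of tau step \<sigma> c0 "gg \<sigma> f" n, OF W g0 ch og] by blast
    have "DUPOK tau step (f n) (gg \<sigma> f n) d" using L_dup[OF conjunct1[OF inv] og d] .
    then have "gmove tau step (f n) (dtr tau step (f n) (gg \<sigma> f n) d)" unfolding DUPOK_def by blast
    moreover have "\<not> (\<exists>c'. gmove tau step (last p) c')" using fp unfolding fin_play_def by blast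
    ultimately show False unfolding lp by blast
  qed
next
  fix \<rho> assume ip: "inf_play tau step (sig' tau step \<sigma>) c0 \<rho>"
  have f0: "\<rho> 0 = c0" using ip unfolding inf_play_def by blast
  have st: "\<forall>i<n. gmove tau step (\<rho> i) (\<rho> (Suc i)) \<and>
      (owner (\<rho> i) = Duplicator \<longrightarrow> \<rho> (Suc i) = sig' tau step \<sigma> (map \<rho> [0..<Suc i]))" for n
    using ip unfolding inf_play_def by blast
  let ?g = "gg \<sigma> \<rho>"
  have F: "gmove tau step (?g j) (?g (Suc j)) \<and>
      (owner (?g j) = Duplicator \<longrightarrow> ?g (Suc j) = \<sigma> (map ?g [0..<Suc j])) \<and>
      RW step \<rho> ?g j" for j
  proof -
    have X: "\<forall>j'<Suc j. gmove tau step (?g j') (?g (Suc j')) \<and>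
      (owner (?g j') = Duplicator \<longrightarrow> ?g (Suc j') = \<sigma> (map ?g [0..<Suc j'])) \<and>
      RW step \<rho> ?g j'" using sim_inv[OF W f0 st, of "Suc j" "Suc j"] by blast
    show ?thesis using X lessI by blast
  qed
  have RRall: "RR step (\<rho> j) (?g j)" for j
    using sim_inv[OF W f0 st, of j j] by blast
  have g0: "?g 0 = c0" using f0 by (simp add: gg0)
  have gall: "\<forall>i. gmove tau step (?g i) (?g (Suc i)) \<and>
      (owner (?g i) = Duplicator \<longrightarrow> ?g (Suc i) = \<sigma> (map ?g [0..<Suc i]))" using F by blast
  have "inf_play tau step \<sigma> c0 ?g"
    unfolding inf_play_def using g0 gall by blast
  then have inf: "\<exists>\<^sub>\<infinity>i. rew (?g i) = Check" using W unfolding winning_strategy_def by blast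
  show "\<exists>\<^sub>\<infinity>i. rew (\<rho> i) = Check"
  proof (rule infm_transfer[where Q = "\<lambda>i. rew (?g i) = Check"
        and A = "\<lambda>j. FSR step (\<rho> j) (?g j)" and B = "\<lambda>j. SYR step (\<rho> j) (?g j)"])
    show "\<exists>\<^sub>\<infinity>i. rew (?g i) = Check" by (rule inf)
  next
    fix j show "\<not> (FSR step (\<rho> j) (?g j) \<and> SYR step (\<rho> j) (?g j))" by (rule FS_SY)
  next
    fix j assume "rew (?g (Suc j)) = Check"
    then show "rew (\<rho> (Suc j)) = Check \<or> rew (\<rho> j) = Check \<or>
        (FSR step (\<rho> j) (?g j) \<and> SYR step (\<rho> (Suc j)) (?g (Suc j)))"
      using F[of j] unfolding RW_def by blast
  next
    fix j assume "FSR step (\<rho> (Suc j)) (?g (Suc j))"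
    then show "FSR step (\<rho> j) (?g j) \<or> rew (\<rho> j) = Check"
      using F[of j] unfolding RW_def by blast
  qed
qed

theorem lemma5p12:
  fixes tau :: 'a and step :: "'s \<Rightarrow> 'a \<Rightarrow> 's \<Rightarrow> bool" and s t :: 's
  assumes "dup_wins tau step (Conf Spoiler (s, t) None None Star)"
  shows "\<exists>\<sigma>. winning_strategy tau step \<sigma> (Conf Spoiler (s, t) None None Star) \<and> eager step \<sigma>"
proof -
  obtain \<sigma> where W: "winning_strategy tau step \<sigma> (Conf Spoiler (s, t) None None Star)"
    using assms unfolding dup_wins_def by blast
  show ?thesis by (intro exI[of _ "sig' tau step \<sigma>"] conjI main_win[OF W] sig'_eager)
qed
end
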